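(* In the slot formulation of the weighted balls-into-bins process, for every $0<a<\lambda/2$ and every $t\ge0$, $$\mathbb E\left[\Psi(x^s(t+1))-\Psi(x^s(t))\,\middle|\,x^s(t)\right]\le\sum_{i=1}^N\left(p_i\left(-a+Sa^2\right)+\left(\frac aN+S\frac{a^2}{N^2}\right)\right)e^{-a x^s_i(t)}.$$
   Context: Weighted balls into weighted bins: $n$ bins with positive integer weights $N_1,\dots,N_n$, $N=\sum_iN_i$; $\mathcal D$ on $[n]$ is $(\alpha,\beta)$-biased, i.e. $\frac{N_i}{\alpha N}\le\Pr_{\mathcal D}[i]\le\frac{\beta N_i}{N}$. Ball weights $w(t)$ are i.i.d. from $\mathcal W$ on $[0,\infty)$ with $\mathbb E[\mathcal W]=1$ and $M(z)=\mathbb E[e^{z\mathcal W}]$ finite at $z=\lambda$ for some $\lambda>0$; $S\ge1$ is a constant with $M''(z)\le2S$ for all $|z|<\lambda/2$. Each round two bins are sampled independently from $\mathcal D$ and the ball goes to the sampled bin with smaller value $v_i(t-1)=w_i(t-1)/N_i$. Slot formulation: bin $i$ consists of $N_i$ unit slots; the normalized slot vector $x^s(t)\in\mathbb R^N$ has, for each slot of bin $i$, the entry $v_i(t)-\frac1N\sum_{t'\le t}w(t')$, indexed so that $x^s_1(t)\ge\dots\ge x^s_N(t)$. Each round two slots are drawn independently (a slot of bin $i$ with probability $\Pr_{\mathcal D}[i]/N_i$), the one later in the sorted order is selected, and the ball's weight is spread evenly over its bin's slots; $p_i$ is the conditional probability, given $x^s(t)$, that the selected slot in round $t+1$ is the $i$-th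 in sorted order. $\Psi(y)=\sum_je^{-ay_j}$. *)

theory Defs
  imports "HOL-Probability.Probability"
begin

text \<open>Bins are 0,...,n-1 with positive integer weights Nw i; N = sum of Nw i.
  Loads L i = w_i(t) (total weight in bin i); bin value v_i = L i / Nw i.
  A sorted slot order is described by b :: nat => nat: the slot at sorted position
  k (0 <= k < N) belongs to bin b k.\<close>

definition total_weight :: "nat \<Rightarrow> (nat \<Rightarrow> nat) \<Rightarrow> nat" where
  "total_weight n Nw = (\<Sum>i<n. Nw i)"

definition biased :: "nat \<Rightarrow> (nat \<Rightarrow> nat) \<Rightarrow> real \<Rightarrow> real \<Rightarrow> nat pmf \<Rightarrow> bool" where
  "biased n Nw \<alpha> \<beta> D \<longleftrightarrow> set_pmf D \<subseteq> {..<n} \<and>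
     (\<forall>i<n. real (Nw i) / (\<alpha> * real (total_weight n Nw)) \<le> pmf D i \<and>
            pmf D i \<le> \<beta> * real (Nw i) / real (total_weight n Nw))"

text \<open>Normalized slot vector: entry at sorted position k is v_{b k} - (total ball weight)/N,
  where the total ball weight thrown so far equals the sum of all loads.\<close>
definition slot_vec :: "nat \<Rightarrow> (nat \<Rightarrow> nat) \<Rightarrow> (nat \<Rightarrow> nat) \<Rightarrow> (nat \<Rightarrow> real) \<Rightarrow> nat \<Rightarrow> real" where
  "slot_vec n Nw b L k = L (b k) / real (Nw (b k)) - (\<Sum>i<n. L i) / real (total_weight n Nw)"

definition is_sorted_slot_order :: "nat \<Rightarrow> (nat \<Rightarrow> nat) \<Rightarrow> (nat \<Rightarrow> nat) \<Rightarrow> (nat \<Rightarrow> real) \<Rightarrow> bool" where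
  "is_sorted_slot_order n Nw b L \<longleftrightarrow>
     (\<forall>k < total_weight n Nw. b k < n) \<and>
     (\<forall>i<n. card {k. k < total_weight n Nw \<and> b k = i} = Nw i) \<and>
     (\<forall>k k'. k \<le> k' \<longrightarrow> k' < total_weight n Nw \<longrightarrow> slot_vec n Nw b L k' \<le> slot_vec n Nw b L k)"

definition Psi :: "real \<Rightarrow> nat \<Rightarrow> (nat \<Rightarrow> real) \<Rightarrow> real" where
  "Psi a N y = (\<Sum>j<N. exp (- a * y j))"

text \<open>One slot draw: bin i from D, then a uniformly random slot of bin i
  (so a given slot of bin i has probability Pr_D[i]/N_i).\<close>
definition slot_draw :: "nat \<Rightarrow> (nat \<Rightarrow> nat) \<Rightarrow> (nat \<Rightarrow> nat) \<Rightarrow> nat pmf \<Rightarrow> nat pmf" where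
  "slot_draw n Nw b D = bind_pmf D (\<lambda>i. pmf_of_set {k. k < total_weight n Nw \<and> b k = i})"

text \<open>Two independent slot draws; the one later in sorted order is selected.\<close>
definition selected_slot :: "nat \<Rightarrow> (nat \<Rightarrow> nat) \<Rightarrow> (nat \<Rightarrow> nat) \<Rightarrow> nat pmf \<Rightarrow> nat pmf" where
  "selected_slot n Nw b D =
     map_pmf (\<lambda>(k1, k2). max k1 k2) (pair_pmf (slot_draw n Nw b D) (slot_draw n Nw b D))"

definition mgf :: "real measure \<Rightarrow> real \<Rightarrow> real" where
  "mgf W z = (\<integral>w. exp (z * w) \<partial>W)"

end

theory Submission
  imports Defs
begin


lemma pow_le_exp:
  fixes w e :: real assumes "0 \<le> w" "0 < e"
  shows "w ^ m \<le> (real m / e) ^ m * exp (e * w)"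
proof (cases "m = 0")
  case True then show ?thesis using assms by simp
next
  case False
  have "e * w / m \<le> exp (e * w / m)" using exp_ge_add_one_self[of "e*w/m"] by linarith
  moreover have "0 \<le> e * w / m" using assms by simp
  ultimately have "(e * w / m) ^ m \<le> exp (e * w / m) ^ m" by (rule power_mono)
  also have "\<dots> = exp (e * w)" using False by (simp add: exp_of_nat_mult[symmetric])
  finally have 1: "(e * w / m) ^ m \<le> exp (e * w)" .
  have "w ^ m = (real m / e) ^ m * (e * w / m) ^ m" using False assms
    by (simp add: power_mult_distrib[symmetric])
  also have "\<dots> \<le> (real m / e) ^ m * exp (e * w)" using 1 assms by (intro mult_left_mono) auto
  finally show ?thesis .
qed

lemma exp_taylor2: "\<bar>exp x - 1 - x\<bar> \<le> x\<^sup>2 * exp \<bar>x::real\<bar>"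
proof -
  obtain t where t: "\<bar>t\<bar> \<le> \<bar>x\<bar>" "exp x = (\<Sum>m<2. x ^ m / fact m) + (exp t / fact 2) * x ^ 2"
    using Maclaurin_exp_le[of x 2] by blast
  have e: "exp x - 1 - x = exp t / 2 * x\<^sup>2" using t(2) by (simp add: numeral_2_eq_2)
  have "exp t \<le> exp \<bar>x\<bar>" using t(1) by simp
  have "\<bar>exp x - 1 - x\<bar> = exp t / 2 * x\<^sup>2" unfolding e by simp
  also have "\<dots> \<le> exp t * x\<^sup>2" by simp
  also have "\<dots> \<le> exp \<bar>x\<bar> * x\<^sup>2" using \<open>exp t \<le> exp \<bar>x\<bar>\<close> by (intro mult_right_mono) auto
  finally show ?thesis by (simp add: mult.commute)
qed

definition Emom :: "real measure \<Rightarrow> nat \<Rightarrow> real \<Rightarrow> real" where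
  "Emom W k z = (\<integral>w. w ^ k * exp (z * w) \<partial>W)"

context
  fixes W :: "real measure" and lam :: real
  assumes W_prob: "prob_space W" and W_borel: "sets W = sets borel"
    and W_nonneg: "AE w in W. 0 \<le> w"
    and lam_pos: "lam > 0" and mgf_fin: "integrable W (\<lambda>w. exp (lam * w))"
begin

lemma meas_W: "f \<in> borel_measurable borel \<Longrightarrow> f \<in> borel_measurable W"
  using measurable_cong_sets[OF W_borel refl, of borel] by auto

lemma int_mom:
  assumes "c \<le> 3 * lam / 4"
  shows "integrable W (\<lambda>w. w ^ m * exp (c * w))"
proof (rule Bochner_Integration.integrable_bound)
  show "integrable W (\<lambda>w. (real m / (lam/4)) ^ m * exp (lam * w))" using mgf_fin by simp
  show "(\<lambda>w. w ^ m * exp (c * w)) \<in> borel_measurable W" by (intro meas_W) measurable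
  show "AE w in W. norm (w ^ m * exp (c * w)) \<le> norm ((real m / (lam/4)) ^ m * exp (lam * w))"
    using W_nonneg
  proof eventually_elim
    case (elim w)
    have 1: "w ^ m \<le> (real m / (lam/4)) ^ m * exp ((lam/4) * w)"
      using pow_le_exp[OF elim, of "lam/4" m] lam_pos by simp
    have 2: "exp (c * w) \<le> exp ((3*lam/4) * w)" using assms elim by (intro exp_mono mult_right_mono) auto
    have "norm (w ^ m * exp (c * w)) = w ^ m * exp (c * w)" using elim by simp
    also have "\<dots> \<le> (real m / (lam/4)) ^ m * exp ((lam/4) * w) * exp ((3*lam/4) * w)"
      using 1 2 elim lam_pos by (intro mult_mono) auto
    also have "\<dots> = (real m / (lam/4)) ^ m * exp (lam * w)"
      by (simp add: mult.assoc exp_add[symmetric] algebra_simps)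
    also have "\<dots> = norm ((real m / (lam/4)) ^ m * exp (lam * w))" using lam_pos by simp
    finally show ?case .
  qed
qed

lemma abs_int_le:
  fixes f g :: "real \<Rightarrow> real"
  assumes "integrable W f" "integrable W g" "AE w in W. \<bar>f w\<bar> \<le> g w"
  shows "\<bar>\<integral>w. f w \<partial>W\<bar> \<le> (\<integral>w. g w \<partial>W)"
proof -
  have "(\<integral>w. f w \<partial>W) \<le> (\<integral>w. g w \<partial>W)"
    using assms(3) by (intro integral_mono_AE assms(1,2)) auto
  moreover have "(\<integral>w. - f w \<partial>W) \<le> (\<integral>w. g w \<partial>W)"
    using assms(3) by (intro integral_mono_AE assms(1,2) integrable_minus) auto
  ultimately show ?thesis by simp
qed

lemma Emom_quad:
  assumes z: "\<bar>z\<bar> < lam / 2" and h: "\<bar>y - z\<bar> < lam / 4"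
  shows "\<bar>Emom W k y - Emom W k z - (y - z) * Emom W (Suc k) z\<bar>
         \<le> (y - z)\<^sup>2 * (\<integral>w. w ^ (k+2) * exp (3*lam/4 * w) \<partial>W)"
proof -
  have yb: "y \<le> 3*lam/4" "z \<le> 3*lam/4" using z h by (simp_all add: abs_less_iff, linarith+)
  have iy: "integrable W (\<lambda>w. w ^ k * exp (y * w))" using yb by (intro int_mom) auto
  have iz: "integrable W (\<lambda>w. w ^ k * exp (z * w))" using yb by (intro int_mom) auto
  have iz1: "integrable W (\<lambda>w. w ^ Suc k * exp (z * w))" using yb by (intro int_mom) auto
  have iC: "integrable W (\<lambda>w. w ^ (k+2) * exp (3*lam/4 * w))" by (intro int_mom) auto
  have eqA: "Emom W k y - Emom W k z - (y - z) * Emom W (Suc k) z =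
        (\<integral>w. w ^ k * exp (y * w) - w ^ k * exp (z * w) - (y - z) * (w ^ Suc k * exp (z * w)) \<partial>W)"
    unfolding Emom_def using iy iz iz1 by (simp add: integrable_diff)
  have "\<bar>\<integral>w. w ^ k * exp (y * w) - w ^ k * exp (z * w) - (y - z) * (w ^ Suc k * exp (z * w)) \<partial>W\<bar> \<le> (\<integral>w. (y - z)\<^sup>2 * (w ^ (k+2) * exp (3*lam/4 * w)) \<partial>W)"
  proof (rule abs_int_le)
    show "integrable W (\<lambda>w. w ^ k * exp (y * w) - w ^ k * exp (z * w) - (y - z) * (w ^ Suc k * exp (z * w)))"
      using iy iz iz1 by auto
    show "integrable W (\<lambda>w. (y - z)\<^sup>2 * (w ^ (k+2) * exp (3*lam/4 * w)))" using iC by auto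
    show "AE w in W. \<bar>w ^ k * exp (y * w) - w ^ k * exp (z * w) - (y - z) * (w ^ Suc k * exp (z * w))\<bar>
           \<le> (y - z)\<^sup>2 * (w ^ (k+2) * exp (3*lam/4 * w))"
      using W_nonneg
    proof eventually_elim
      case (elim w)
      define h where "h = y - z"
      have ey: "exp (y * w) = exp (z * w) * exp (h * w)" unfolding h_def exp_add[symmetric] by (simp add: algebra_simps)
      have eq: "w ^ k * exp (y * w) - w ^ k * exp (z * w) - (y - z) * (w ^ Suc k * exp (z * w))
              = (w ^ k * exp (z * w)) * (exp (h * w) - 1 - h * w)"
        unfolding ey h_def by (simp add: algebra_simps)
      have "\<bar>(w ^ k * exp (z * w)) * (exp (h * w) - 1 - h * w)\<bar>
            = (w ^ k * exp (z * w)) * \<bar>exp (h * w) - 1 - h * w\<bar>" using elim by (simp add: abs_mult)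
      also have "\<dots> \<le> (w ^ k * exp (z * w)) * ((h * w)\<^sup>2 * exp \<bar>h * w\<bar>)"
        using elim by (intro mult_left_mono exp_taylor2) auto
      also have "\<dots> = h\<^sup>2 * (w ^ (k+2) * exp ((z + \<bar>h\<bar>) * w))"
      proof -
        have A: "exp ((z + \<bar>h\<bar>) * w) = exp (z * w) * exp (\<bar>h\<bar> * w)" by (simp add: distrib_right exp_add)
        have B: "\<bar>h * w\<bar> = \<bar>h\<bar> * w" using elim by (simp add: abs_mult)
        show ?thesis unfolding A B by (simp add: power_add power2_eq_square mult_ac)
      qed
      also have "\<dots> \<le> h\<^sup>2 * (w ^ (k+2) * exp (3*lam/4 * w))"
      proof -
        have "z \<le> \<bar>z\<bar>" by simp
        hence "z + \<bar>h\<bar> \<le> 3*lam/4" using z h unfolding h_def by linarith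
        hence "exp ((z + \<bar>h\<bar>) * w) \<le> exp (3*lam/4 * w)" using elim by (intro exp_mono mult_right_mono)
        thus ?thesis using elim by (intro mult_left_mono) auto
      qed
      finally show ?case unfolding eq h_def .
    qed
  qed
  also have "\<dots> = (y - z)\<^sup>2 * (\<integral>w. w ^ (k+2) * exp (3*lam/4 * w) \<partial>W)" by simp
  finally show ?thesis unfolding eqA .
qed

lemma Emom_deriv:
  assumes z: "\<bar>z\<bar> < lam / 2"
  shows "(Emom W k has_field_derivative Emom W (Suc k) z) (at z)"
proof -
  define C where "C = \<bar>\<integral>w. w ^ (k+2) * exp (3*lam/4 * w) \<partial>W\<bar> + 1"
  have C: "C > 0" unfolding C_def by simp
  show ?thesis unfolding has_field_derivative_iff
  proof (rule LIM_I)
    fix r :: real assume r: "0 < r"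
    show "\<exists>s>0. \<forall>y. y \<noteq> z \<and> norm (y - z) < s \<longrightarrow>
            norm ((Emom W k y - Emom W k z) / (y - z) - Emom W (Suc k) z) < r"
    proof (intro exI[of _ "min (lam/4) (r / C)"] conjI allI impI)
      show "0 < min (lam/4) (r / C)" using lam_pos r C by simp
      fix y assume y: "y \<noteq> z \<and> norm (y - z) < min (lam / 4) (r / C)"
      have hy: "\<bar>y - z\<bar> < lam / 4" "\<bar>y - z\<bar> < r / C" "\<bar>y - z\<bar> > 0" using y by auto
      have q: "\<bar>Emom W k y - Emom W k z - (y - z) * Emom W (Suc k) z\<bar> \<le> (y - z)\<^sup>2 * C"
      proof -
        have "\<bar>Emom W k y - Emom W k z - (y - z) * Emom W (Suc k) z\<bar>
         \<le> (y - z)\<^sup>2 * (\<integral>w. w ^ (k+2) * exp (3*lam/4 * w) \<partial>W)" by (rule Emom_quad[OF z hy(1)])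
        also have "\<dots> \<le> (y - z)\<^sup>2 * C" unfolding C_def by (intro mult_left_mono) auto
        finally show ?thesis .
      qed
      have "(Emom W k y - Emom W k z) / (y - z) - Emom W (Suc k) z
            = (Emom W k y - Emom W k z - (y - z) * Emom W (Suc k) z) / (y - z)"
        using hy by (simp add: field_simps)
      hence "norm ((Emom W k y - Emom W k z) / (y - z) - Emom W (Suc k) z)
             = \<bar>Emom W k y - Emom W k z - (y - z) * Emom W (Suc k) z\<bar> / \<bar>y - z\<bar>"
        by (simp add: abs_divide)
      also have "\<dots> \<le> (y - z)\<^sup>2 * C / \<bar>y - z\<bar>" using q hy by (intro divide_right_mono) auto
      also have "\<dots> = \<bar>y - z\<bar> * C"
      proof -
        define d where "d = \<bar>y - z\<bar>"
        have "(y - z)\<^sup>2 = d * d" unfolding d_def by (simp add: power2_eq_square)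
        moreover have "d > 0" unfolding d_def using hy by simp
        ultimately show ?thesis unfolding d_def[symmetric] by simp
      qed
      also have "\<dots> < r / C * C" using hy C by (intro mult_strict_right_mono) auto
      also have "\<dots> = r" using C by simp
      finally show "norm ((Emom W k y - Emom W k z) / (y - z) - Emom W (Suc k) z) < r" .
    qed
  qed
qed

lemma mgf_eq: "mgf W = Emom W 0"
  unfolding mgf_def Emom_def by (simp add: mult.commute)

lemma mgf_bound:
  assumes W_mean: "(\<integral>w. w \<partial>W) = 1"
    and S_bound: "\<forall>z. \<bar>z\<bar> < lam / 2 \<longrightarrow> deriv (deriv (mgf W)) z \<le> 2 * S"
    and x: "\<bar>x\<bar> < lam / 2"
  shows "mgf W x \<le> 1 + x + S * x\<^sup>2"
proof -
  have d1: "deriv (mgf W) t = Emom W 1 t" if "\<bar>t\<bar> < lam / 2" for t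
    unfolding mgf_eq using Emom_deriv[OF that, of 0] by (simp add: DERIV_imp_deriv)
  have d2: "Emom W 2 t \<le> 2 * S" if t: "\<bar>t\<bar> < lam / 2" for t
  proof -
    have E1: "(Emom W 1 has_field_derivative Emom W 2 t) (at t)"
      using Emom_deriv[OF t, of 1] by (simp add: numeral_2_eq_2)
    have "(deriv (mgf W) has_field_derivative Emom W 2 t) (at t)"
    proof (rule has_field_derivative_transform_within_open[OF E1])
      show "open {t. \<bar>t\<bar> < lam / 2}" by (intro open_Collect_less continuous_intros)
      show "t \<in> {t. \<bar>t\<bar> < lam / 2}" using t by simp
      show "Emom W 1 u = deriv (mgf W) u" if "u \<in> {t. \<bar>t\<bar> < lam / 2}" for u
        using d1[of u] that by simp
    qed
    hence "deriv (deriv (mgf W)) t = Emom W 2 t" by (rule DERIV_imp_deriv)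
    thus ?thesis using S_bound t by metis
  qed
  have P: "prob_space W" by (rule W_prob)
  have e00: "Emom W 0 0 = 1" unfolding Emom_def using prob_space.prob_space[OF P] by simp
  have e10: "Emom W 1 0 = 1" unfolding Emom_def using W_mean by simp
  show ?thesis
  proof (cases "x = 0")
    case True then show ?thesis using e00 by (simp add: mgf_eq)
  next
    case False
    have "\<exists>t. (if x < 0 then x < t \<and> t < 0 else 0 < t \<and> t < x) \<and>
      Emom W 0 x = (\<Sum>m<2. (Emom W m 0 / fact m) * (x - 0)^m) + (Emom W 2 t / fact 2) * (x - 0)^2"
    proof (rule Taylor[of 2 "\<lambda>m. Emom W m" "Emom W 0" "- \<bar>x\<bar>" "\<bar>x\<bar>" 0 x])
      show "\<forall>m t. m < 2 \<and> - \<bar>x\<bar> \<le> t \<and> t \<le> \<bar>x\<bar> \<longrightarrow> DERIV (Emom W m) t :> Emom W (Suc m) t"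
      proof (intro allI impI)
        fix m :: nat and t :: real assume "m < 2 \<and> - \<bar>x\<bar> \<le> t \<and> t \<le> \<bar>x\<bar>"
        hence "\<bar>t\<bar> \<le> \<bar>x\<bar>" by (simp add: abs_le_iff)
        hence "\<bar>t\<bar> < lam / 2" using x by linarith
        thus "DERIV (Emom W m) t :> Emom W (Suc m) t" by (rule Emom_deriv)
      qed
    next
      show "0 < (2::nat)" by simp
    next
      show "Emom W 0 = Emom W 0" ..
    next
      show "- \<bar>x\<bar> \<le> 0" "0 \<le> \<bar>x\<bar>" "- \<bar>x\<bar> \<le> x" "x \<le> \<bar>x\<bar>" by auto
    next
      show "x \<noteq> 0" by (rule False)
    qed
    then obtain t where t: "(if x < 0 then x < t \<and> t < 0 else 0 < t \<and> t < x)"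
      "Emom W 0 x = (\<Sum>m<2. (Emom W m 0 / fact m) * (x - 0)^m) + (Emom W 2 t / fact 2) * (x - 0)^2"
      by blast
    have "\<bar>t\<bar> < lam / 2" 
    proof -
      have "\<bar>t\<bar> \<le> \<bar>x\<bar>" using t(1) by (cases "x < 0") auto
      thus ?thesis using x by linarith
    qed
    hence "Emom W 2 t \<le> 2 * S" by (rule d2)
    hence "Emom W 2 t / 2 \<le> S" by simp
    hence "Emom W 2 t / 2 * x\<^sup>2 \<le> S * x\<^sup>2" by (rule mult_right_mono) simp
    moreover have "Emom W 0 x = 1 + x + Emom W 2 t / 2 * x\<^sup>2"
    proof -
      have "(\<Sum>m<2. (Emom W m 0 / fact m) * (x - 0)^m) = Emom W 0 0 + Emom W 1 0 * x"
        by (simp add: numeral_2_eq_2)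
      thus ?thesis using t(2) e00 e10 by simp
    qed
    ultimately show ?thesis unfolding mgf_eq by linarith
  qed
qed

end




lemma set_slot_draw:
  assumes "is_sorted_slot_order n Nw b L" "biased n Nw \<alpha> \<beta> D" "\<forall>i<n. Nw i > 0"
  shows "set_pmf (slot_draw n Nw b D) \<subseteq> {..<total_weight n Nw}"
proof
  fix k assume "k \<in> set_pmf (slot_draw n Nw b D)"
  then obtain i where i: "i \<in> set_pmf D" "k \<in> set_pmf (pmf_of_set {k. k < total_weight n Nw \<and> b k = i})"
    unfolding slot_draw_def by auto
  have "i < n" using i(1) assms(2) unfolding biased_def by auto
  hence "card {k. k < total_weight n Nw \<and> b k = i} = Nw i" using assms(1) unfolding is_sorted_slot_order_def by auto
  hence ne: "{k. k < total_weight n Nw \<and> b k = i} \<noteq> {}" using assms(3) \<open>i < n\<close> by (metis card.empty less_not_refl)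
  have "finite {k. k < total_weight n Nw \<and> b k = i}" by simp
  with ne i(2) show "k \<in> {..<total_weight n Nw}" by simp
qed

lemma set_selected:
  assumes "is_sorted_slot_order n Nw b L" "biased n Nw \<alpha> \<beta> D" "\<forall>i<n. Nw i > 0"
  shows "set_pmf (selected_slot n Nw b D) \<subseteq> {..<total_weight n Nw}"
  using set_slot_draw[OF assms] unfolding selected_slot_def by (auto simp: max_def)

lemma sum_bin:
  fixes f :: "nat \<Rightarrow> real"
  shows "(\<Sum>j<N. if b j = i then f j else 0) = (\<Sum>j\<in>{j. j < N \<and> b j = i}. f j)"
proof -
  have "{j. j < N \<and> b j = i} = {j\<in>{..<N}. b j = i}" by auto
  thus ?thesis using sum.inter_filter[of "{..<N}" f "\<lambda>j. b j = i"] by simp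
qed

lemma sq_diff_le: "0 \<le> u \<Longrightarrow> 0 \<le> v \<Longrightarrow> (a * (u - v))\<^sup>2 \<le> a\<^sup>2 * u\<^sup>2 + a\<^sup>2 * v\<^sup>2" for a u v :: real
proof -
  assume "0 \<le> u" "0 \<le> v"
  hence "0 \<le> a\<^sup>2 * (u * v)" by simp
  moreover have "(a * (u - v))\<^sup>2 = a\<^sup>2 * u\<^sup>2 + a\<^sup>2 * v\<^sup>2 - 2 * (a\<^sup>2 * (u * v))"
    by (simp add: power2_eq_square algebra_simps)
  ultimately show ?thesis by linarith
qed

lemma pointwise_bound:
  fixes a S u v e :: real
  assumes "0 \<le> u" "0 \<le> v" "0 \<le> S" "0 \<le> e"
  shows "e * (- a * (u - v) + S * (- a * (u - v))\<^sup>2) \<le> (a * v + S * a\<^sup>2 * v\<^sup>2) * e + (- a * u + S * a\<^sup>2 * u\<^sup>2) * e"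
proof -
  have "(- a * (u - v))\<^sup>2 = (a * (u - v))\<^sup>2" by (simp add: power2_eq_square)
  also have "\<dots> \<le> a\<^sup>2 * u\<^sup>2 + a\<^sup>2 * v\<^sup>2" by (rule sq_diff_le[OF assms(1,2)])
  finally have "S * (- a * (u - v))\<^sup>2 \<le> S * (a\<^sup>2 * u\<^sup>2 + a\<^sup>2 * v\<^sup>2)" using assms(3) by (rule mult_left_mono)
  hence "- a * (u - v) + S * (- a * (u - v))\<^sup>2 \<le> (a * v + S * a\<^sup>2 * v\<^sup>2) + (- a * u + S * a\<^sup>2 * u\<^sup>2)"
    by (simp add: algebra_simps)
  hence "e * (- a * (u - v) + S * (- a * (u - v))\<^sup>2) \<le> e * ((a * v + S * a\<^sup>2 * v\<^sup>2) + (- a * u + S * a\<^sup>2 * u\<^sup>2))"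
    using assms(4) by (rule mult_left_mono)
  thus ?thesis by (simp add: algebra_simps)
qed

lemma per_k:
  fixes E :: "nat \<Rightarrow> real" and Nw b :: "nat \<Rightarrow> nat" and N :: nat and a S :: real
  assumes a: "0 < a" and S: "1 \<le> S" and Npos: "0 < N"
    and card: "card {j. j < N \<and> b j = b k} = Nw (b k)" and Nwpos: "Nw (b k) > 0"
    and E: "\<forall>i. 0 \<le> E i"
  defines "z \<equiv> \<lambda>j. - a * ((if b j = b k then 1 / real (Nw (b k)) else 0) - 1 / real N)"
  shows "(\<Sum>j<N. E (b j) * (z j + S * (z j)\<^sup>2))
         \<le> (- a + S * a\<^sup>2) * E (b k) + (\<Sum>j<N. (a / real N + S * a\<^sup>2 / (real N)\<^sup>2) * E (b j))"
proof -
  define u where "u = 1 / real (Nw (b k))"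
  define v where "v = 1 / real N"
  define Q where "Q = - a * u + S * a\<^sup>2 * u\<^sup>2"
  have u: "0 \<le> u" and v: "0 \<le> v" unfolding u_def v_def by auto
  have K: "a / real N + S * a\<^sup>2 / (real N)\<^sup>2 = a * v + S * a\<^sup>2 * v\<^sup>2"
    unfolding v_def by (simp add: power2_eq_square)
  have pw: "E (b j) * (z j + S * (z j)\<^sup>2) \<le> (a / real N + S * a\<^sup>2 / (real N)\<^sup>2) * E (b j)
              + (if b j = b k then Q * E (b k) else 0)" for j
  proof (cases "b j = b k")
    case True
    have "z j = - a * (u - v)" unfolding z_def u_def v_def using True by simp
    have S0: "0 \<le> S" using S by simp
    have e0: "0 \<le> E (b k)" using E by simp
    show ?thesis unfolding K Q_def \<open>z j = - a * (u - v)\<close> using True pointwise_bound[OF u v S0 e0, of a] by simp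
  next
    case False
    have "z j = a * v" unfolding z_def v_def using False by simp
    thus ?thesis unfolding K using False by (simp add: power2_eq_square algebra_simps)
  qed
  have "(\<Sum>j<N. E (b j) * (z j + S * (z j)\<^sup>2))
        \<le> (\<Sum>j<N. (a / real N + S * a\<^sup>2 / (real N)\<^sup>2) * E (b j) + (if b j = b k then Q * E (b k) else 0))"
    by (rule sum_mono) (rule pw)
  also have "\<dots> = (\<Sum>j<N. (a / real N + S * a\<^sup>2 / (real N)\<^sup>2) * E (b j)) + (\<Sum>j<N. if b j = b k then Q * E (b k) else 0)"
    by (rule sum.distrib)
  also have "(\<Sum>j<N. if b j = b k then Q * E (b k) else 0) = real (Nw (b k)) * (Q * E (b k))"
    using sum_bin[where N=N and b=b and i="b k" and f="\<lambda>_. Q * E (b k)"] card by simp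
  also have "real (Nw (b k)) * (Q * E (b k)) = (- a + S * a\<^sup>2 * u) * E (b k)"
    unfolding Q_def u_def using Nwpos by (simp add: power2_eq_square field_simps)
  also have "\<dots> \<le> (- a + S * a\<^sup>2) * E (b k)"
  proof -
    have "u \<le> 1" unfolding u_def using Nwpos by simp
    hence "S * a\<^sup>2 * u \<le> S * a\<^sup>2" using S by (intro mult_left_mono[of u 1, simplified]) auto
    thus ?thesis using E by (intro mult_right_mono) auto
  qed
  finally show ?thesis by linarith
qed

theorem mainTheorem9:
  fixes n :: nat and Nw :: "nat \<Rightarrow> nat" and D :: "nat pmf" and \<alpha> \<beta> :: real
    and W :: "real measure" and lam S a :: real
    and L :: "nat \<Rightarrow> real" and b :: "nat \<Rightarrow> nat"
  defines "N \<equiv> total_weight n Nw"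
  assumes Nw_pos: "\<forall>i<n. Nw i > 0"
    and D_biased: "biased n Nw \<alpha> \<beta> D"
    and W_prob: "prob_space W" and W_borel: "sets W = sets borel"
    and W_nonneg: "AE w in W. 0 \<le> w"
    and W_mean: "integrable W (\<lambda>w. w)" "(\<integral>w. w \<partial>W) = 1"
    and lam_pos: "lam > 0" and mgf_fin: "integrable W (\<lambda>w. exp (lam * w))"
    and S_ge: "S \<ge> 1"
    and S_bound: "\<forall>z. \<bar>z\<bar> < lam / 2 \<longrightarrow> deriv (deriv (mgf W)) z \<le> 2 * S"
    and a_pos: "0 < a" and a_lt: "a < lam / 2"
    and L_nonneg: "\<forall>i<n. L i \<ge> 0"
    and sorted: "is_sorted_slot_order n Nw b L"
  shows "(\<integral>w. measure_pmf.expectation (selected_slot n Nw b D)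
            (\<lambda>k. Psi a N (slot_vec n Nw b (L(b k := L (b k) + w)))
                 - Psi a N (slot_vec n Nw b L)) \<partial>W)
         \<le> (\<Sum>i<N. (pmf (selected_slot n Nw b D) i * (- a + S * a\<^sup>2)
                     + (a / real N + S * a\<^sup>2 / (real N)\<^sup>2))
                   * exp (- a * slot_vec n Nw b L i))"
proof -
  have Npos_i: "\<forall>i<n. Nw i \<le> N"
    unfolding N_def total_weight_def by (auto intro: member_le_sum)
  have sD: "set_pmf D \<subseteq> {..<n}" using D_biased unfolding biased_def by simp
  obtain i0 where "i0 \<in> set_pmf D" using set_pmf_not_empty[of D] by blast
  hence "i0 < n" using sD by auto
  hence "Nw i0 \<le> N" "Nw i0 > 0" using Npos_i Nw_pos by auto
  hence Npos: "N > 0" by linarith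
  have bk: "\<forall>k<N. b k < n" and card: "\<forall>i<n. card {k. k < N \<and> b k = i} = Nw i"
    using sorted unfolding is_sorted_slot_order_def N_def by auto
  define T where "T = (\<Sum>i<n. L i)"
  define E where "E = (\<lambda>i. exp (- a * (L i / real (Nw i) - T / real N)))"
  define p where "p = selected_slot n Nw b D"
  define z where "z = (\<lambda>k j. - a * ((if b j = b k then 1 / real (Nw (b k)) else 0) - 1 / real N))"
  have sp: "set_pmf p \<subseteq> {..<N}" unfolding p_def N_def by (rule set_selected[OF sorted D_biased Nw_pos])
  have xE: "exp (- a * slot_vec n Nw b L j) = E (b j)" for j
    unfolding E_def slot_vec_def T_def N_def ..
  have upd: "exp (- a * slot_vec n Nw b (L(b k := L (b k) + w)) j) = E (b j) * exp (z k j * w)"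
    if "k < N" "j < N" for k j w
  proof -
    have bkn: "b k < n" using bk that by auto
    have fe: "L(b k := L (b k) + w) = (\<lambda>i. L i + (if i = b k then w else 0))" by (rule ext) simp
    have sumL: "(\<Sum>i<n. (L(b k := L (b k) + w)) i) = T + w"
      unfolding fe T_def sum.distrib using bkn by simp
    define c where "c = (if b j = b k then 1 / real (Nw (b k)) else 0) - 1 / real N"
    have sv: "slot_vec n Nw b (L(b k := L (b k) + w)) j = (L (b j) / real (Nw (b j)) - T / real N) + w * c"
      unfolding slot_vec_def N_def[symmetric] sumL c_def
      by (cases "b j = b k") (simp_all add: add_divide_distrib algebra_simps)
    have "- a * slot_vec n Nw b (L(b k := L (b k) + w)) j = - a * (L (b j) / real (Nw (b j)) - T / real N) + z k j * w"
      unfolding sv z_def c_def by (simp add: algebra_simps)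
    thus ?thesis unfolding E_def by (simp only: exp_add)
  qed
  have psi: "Psi a N (slot_vec n Nw b (L(b k := L (b k) + w))) - Psi a N (slot_vec n Nw b L)
            = (\<Sum>j<N. E (b j) * (exp (z k j * w) - 1))" if "k < N" for k w
    unfolding Psi_def using upd[OF that] xE by (simp add: sum_subtractf algebra_simps)
  have zb: "\<bar>z k j\<bar> < lam / 2" if "k < N" for k j
  proof -
    have "b k < n" using bk that by auto
    hence nw: "1 \<le> real (Nw (b k))" "real (Nw (b k)) \<le> real N" using Nw_pos Npos_i by auto
    have "\<bar>(if b j = b k then 1 / real (Nw (b k)) else 0) - 1 / real N\<bar> \<le> 1"
    proof (cases "b j = b k")
      case True
      have "1 / real N \<le> 1 / real (Nw (b k))" using nw by (intro divide_left_mono) auto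
      moreover have "1 / real (Nw (b k)) \<le> 1" using nw by simp
      moreover have "0 \<le> 1 / real N" by simp
      ultimately show ?thesis using True by (simp add: abs_le_iff, linarith)
    next
      case False then show ?thesis using Npos by simp
    qed
    hence "\<bar>z k j\<bar> \<le> a" unfolding z_def using a_pos by (simp add: abs_mult)
    thus ?thesis using a_lt by linarith
  qed
  have intz: "integrable W (\<lambda>w. exp (z k j * w))" if "k < N" for k j
    using int_mom[OF W_prob W_borel W_nonneg lam_pos mgf_fin, of "z k j" 0] zb[OF that, of j]
    by (simp add: abs_less_iff)
  have "(\<integral>w. measure_pmf.expectation p
            (\<lambda>k. Psi a N (slot_vec n Nw b (L(b k := L (b k) + w)))
                 - Psi a N (slot_vec n Nw b L)) \<partial>W)
        = (\<integral>w. (\<Sum>k<N. \<Sum>j<N. (pmf p k * E (b j)) * (exp (z k j * w) - 1)) \<partial>W)"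
  proof (rule Bochner_Integration.integral_cong[OF refl])
    fix w
    have "measure_pmf.expectation p
            (\<lambda>k. Psi a N (slot_vec n Nw b (L(b k := L (b k) + w))) - Psi a N (slot_vec n Nw b L))
          = (\<Sum>k<N. pmf p k *\<^sub>R (Psi a N (slot_vec n Nw b (L(b k := L (b k) + w))) - Psi a N (slot_vec n Nw b L)))"
      by (rule integral_measure_pmf) (use sp in auto)
    also have "\<dots> = (\<Sum>k<N. pmf p k * (\<Sum>j<N. E (b j) * (exp (z k j * w) - 1)))"
      by (rule sum.cong[OF refl]) (simp add: psi)
    also have "\<dots> = (\<Sum>k<N. \<Sum>j<N. (pmf p k * E (b j)) * (exp (z k j * w) - 1))"
      by (simp add: sum_distrib_left mult.assoc)
    finally show "measure_pmf.expectation p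
            (\<lambda>k. Psi a N (slot_vec n Nw b (L(b k := L (b k) + w))) - Psi a N (slot_vec n Nw b L))
          = (\<Sum>k<N. \<Sum>j<N. (pmf p k * E (b j)) * (exp (z k j * w) - 1))" .
  qed
  also have "\<dots> = (\<Sum>k<N. \<Sum>j<N. (pmf p k * E (b j)) * (mgf W (z k j) - 1))"
  proof -
    have P: "prob_space W" by (rule W_prob)
    have FM: "finite_measure W" using P by (rule prob_space.axioms(1))
    note ic = finite_measure.integrable_const[OF FM]
    have i1: "integrable W (\<lambda>w. (pmf p k * E (b j)) * (exp (z k j * w) - 1))" if "k < N" for k j
      using intz[OF that, of j] P by (intro integrable_mult_right integrable_diff) (auto intro: ic)
    have "(\<integral>w. (\<Sum>k<N. \<Sum>j<N. (pmf p k * E (b j)) * (exp (z k j * w) - 1)) \<partial>W)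
        = (\<Sum>k<N. (\<integral>w. (\<Sum>j<N. (pmf p k * E (b j)) * (exp (z k j * w) - 1)) \<partial>W))"
      by (rule Bochner_Integration.integral_sum) (use i1 in auto)
    also have "\<dots> = (\<Sum>k<N. \<Sum>j<N. (\<integral>w. (pmf p k * E (b j)) * (exp (z k j * w) - 1) \<partial>W))"
      by (rule sum.cong[OF refl], rule Bochner_Integration.integral_sum) (use i1 in auto)
    also have "\<dots> = (\<Sum>k<N. \<Sum>j<N. (pmf p k * E (b j)) * (mgf W (z k j) - 1))"
    proof (intro sum.cong refl)
      fix k j assume "k \<in> {..<N}" "j \<in> {..<N}"
      hence "integrable W (\<lambda>w. exp (z k j * w))" using intz by auto
      thus "(\<integral>w. (pmf p k * E (b j)) * (exp (z k j * w) - 1) \<partial>W) = (pmf p k * E (b j)) * (mgf W (z k j) - 1)"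
        unfolding mgf_def using prob_space.prob_space[OF P] P
        by (simp add: ic)
    qed
    finally show ?thesis .
  qed
  also have "\<dots> \<le> (\<Sum>k<N. pmf p k * (\<Sum>j<N. E (b j) * (z k j + S * (z k j)\<^sup>2)))"
  proof (rule sum_mono)
    fix k assume k: "k \<in> {..<N}"
    have "(\<Sum>j<N. (pmf p k * E (b j)) * (mgf W (z k j) - 1)) = pmf p k * (\<Sum>j<N. E (b j) * (mgf W (z k j) - 1))"
      by (simp add: sum_distrib_left mult.assoc)
    also have "\<dots> \<le> pmf p k * (\<Sum>j<N. E (b j) * (z k j + S * (z k j)\<^sup>2))"
    proof -
      have pj: "E (b j) * (mgf W (z k j) - 1) \<le> E (b j) * (z k j + S * (z k j)\<^sup>2)" for j
      proof -
        have "mgf W (z k j) \<le> 1 + z k j + S * (z k j)\<^sup>2"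
          using mgf_bound[OF W_prob W_borel W_nonneg lam_pos mgf_fin W_mean(2) S_bound zb] k by auto
        hence "mgf W (z k j) - 1 \<le> z k j + S * (z k j)\<^sup>2" by linarith
        moreover have "0 \<le> E (b j)" unfolding E_def by simp
        ultimately show ?thesis by (rule mult_left_mono)
      qed
      show ?thesis by (intro mult_left_mono sum_mono pj) simp
    qed
    finally show "(\<Sum>j<N. (pmf p k * E (b j)) * (mgf W (z k j) - 1)) \<le> pmf p k * (\<Sum>j<N. E (b j) * (z k j + S * (z k j)\<^sup>2))" .
  qed
  also have "\<dots> \<le> (\<Sum>k<N. pmf p k * ((- a + S * a\<^sup>2) * E (b k) + (\<Sum>j<N. (a / real N + S * a\<^sup>2 / (real N)\<^sup>2) * E (b j))))"
  proof (rule sum_mono, rule mult_left_mono)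
    fix k assume k: "k \<in> {..<N}"
    hence bkk: "b k < n" using bk by auto
    show "(\<Sum>j<N. E (b j) * (z k j + S * (z k j)\<^sup>2)) \<le> (- a + S * a\<^sup>2) * E (b k) + (\<Sum>j<N. (a / real N + S * a\<^sup>2 / (real N)\<^sup>2) * E (b j))"
      unfolding z_def
    proof (rule per_k[OF a_pos S_ge Npos])
      show "card {j. j < N \<and> b j = b k} = Nw (b k)" using card bkk by auto
      show "Nw (b k) > 0" using Nw_pos bkk by auto
      show "\<forall>i. 0 \<le> E i" unfolding E_def by simp
    qed
  qed simp
  also have "\<dots> = (\<Sum>i<N. (pmf p i * (- a + S * a\<^sup>2) + (a / real N + S * a\<^sup>2 / (real N)\<^sup>2)) * exp (- a * slot_vec n Nw b L i))"
  proof -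
    define K where "K = (\<Sum>j<N. (a / real N + S * a\<^sup>2 / (real N)\<^sup>2) * E (b j))"
    have s1: "(\<Sum>k<N. pmf p k) = 1" using sum_pmf_eq_1[of "{..<N}" p] sp by simp
    have "(\<Sum>k<N. pmf p k * ((- a + S * a\<^sup>2) * E (b k) + K))
          = (\<Sum>k<N. pmf p k * (- a + S * a\<^sup>2) * E (b k)) + (\<Sum>k<N. pmf p k) * K"
      by (simp add: distrib_left sum.distrib sum_distrib_right mult.assoc)
    also have "\<dots> = (\<Sum>k<N. pmf p k * (- a + S * a\<^sup>2) * E (b k)) + K" using s1 by simp
    also have "\<dots> = (\<Sum>i<N. (pmf p i * (- a + S * a\<^sup>2) + (a / real N + S * a\<^sup>2 / (real N)\<^sup>2)) * E (b i))"
      unfolding K_def by (simp add: distrib_right sum.distrib)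
    finally show ?thesis unfolding K_def xE .
  qed
  finally show ?thesis unfolding p_def .
qed


end
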